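(* Let $0<A<1$ and let $\theta\in C(\mathbb{R})$ with $\lim_{|x|\to\infty}\theta(x)=0$. Then there is a piecewise constant function $G>0$ on $\mathbb{R}$ such that $G(x)\ge\max(|\theta(x)|,\theta(x)^2)$ for all $x\in\mathbb{R}$, $G$ is even on $\mathbb{R}$ and nonincreasing on $[0,+\infty)$, $\lim_{x\to+\infty}G(x)=0$, and there is $\sigma>0$ such that for all $i\in\mathbb{N}$, $$(\rho_i*G)(x)\le\frac{\sigma}{1+i}G(x)\quad\text{for all }x\in\mathbb{R}.$$
   Context: $\lambda_i:=-1+(2i+1)A$ for $i\in\mathbb{N}$ (so $\lambda_0=A-1<0$ and $\lambda_i-\lambda_0=2iA$). For $i\ge1$, $\rho_i(z):=\frac{1}{2\sqrt{\lambda_i-\lambda_0}}e^{-\sqrt{\lambda_i-\lambda_0}|z|}$, and $\rho_0(z):=\frac{1}{2\sqrt{-\lambda_0}}e^{-\sqrt{-\lambda_0}|z|}$; $*$ denotes convolution on $\mathbb{R}$. *)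

theory Defs
  imports "HOL-Analysis.Analysis"
begin

definition lam :: "real \<Rightarrow> nat \<Rightarrow> real" where
  "lam A i = -1 + (2 * real i + 1) * A"

definition rho :: "real \<Rightarrow> nat \<Rightarrow> real \<Rightarrow> real" where
  "rho A i z =
     (if i = 0 then 1 / (2 * sqrt (- lam A 0)) * exp (- sqrt (- lam A 0) * \<bar>z\<bar>)
      else 1 / (2 * sqrt (lam A i - lam A 0)) * exp (- sqrt (lam A i - lam A 0) * \<bar>z\<bar>))"

definition conv :: "(real \<Rightarrow> real) \<Rightarrow> (real \<Rightarrow> real) \<Rightarrow> real \<Rightarrow> real" where
  "conv f g x = (LINT y|lborel. f (x - y) * g y)"

definition piecewise_constant :: "(real \<Rightarrow> real) \<Rightarrow> bool" where
  "piecewise_constant G \<longleftrightarrow>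
     (\<exists>S. (\<forall>a b. finite (S \<inter> {a..b})) \<and>
          (\<forall>x. x \<notin> S \<longrightarrow> (\<exists>e>0. \<forall>y. \<bar>y - x\<bar> < e \<longrightarrow> G y = G x)))"

end

theory Submission
  imports Defs "HOL-Real_Asymp.Real_Asymp"
begin

lemma nn_exp_half:
  fixes b :: real assumes "b > 0"
  shows "(\<integral>\<^sup>+y. ennreal (exp (-b*y) * indicator {0..} y) \<partial>lborel) = ennreal (1/b)"
proof -
  have h: "((\<lambda>y. exp (-b*y)) has_integral 1/b) {0..}"
    using has_integral_exp_minus_to_infinity[OF assms, of 0] by simp
  have e: "(\<lambda>y. exp (-b*y) * indicator {0..} y) = (\<lambda>y::real. if y \<in> {0..} then exp (-b*y) else 0)"
    by (auto simp: indicator_def)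
  have "((\<lambda>y. exp (-b*y) * indicator {0..} y) has_integral 1/b) UNIV"
    unfolding e has_integral_restrict_UNIV by (rule h)
  then have "integral\<^sup>N lborel (\<lambda>y. exp (-b*y) * indicator {0..} y) = ennreal (1/b)"
    by (intro nn_integral_has_integral_lborel) auto
  then show ?thesis by simp
qed

lemma nn_exp_abs:
  fixes b x :: real assumes "b > 0"
  shows "(\<integral>\<^sup>+y. ennreal (exp (-b*\<bar>x-y\<bar>)) \<partial>lborel) \<le> ennreal (2/b)"
proof -
  define k where "k = (\<lambda>y::real. ennreal (exp (-b*y) * indicator {0..} y))"
  have km[measurable]: "k \<in> borel_measurable borel" unfolding k_def by measurable
  have "(\<integral>\<^sup>+y. ennreal (exp (-b*\<bar>x-y\<bar>)) \<partial>lborel) = (\<integral>\<^sup>+y. ennreal (exp (-b*\<bar>x + (-1)*y - 0\<bar>)) \<partial>lborel)"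
    by simp
  also have "\<dots> = (\<integral>\<^sup>+y. ennreal (exp (-b*\<bar>y\<bar>)) \<partial>lborel)"
    using nn_integral_real_affine[of "\<lambda>y. ennreal (exp (-b*\<bar>y\<bar>))" "-1" x] by simp
  also have "\<dots> \<le> (\<integral>\<^sup>+y. k y + k (0 + (-1) * y) \<partial>lborel)"
    by (intro nn_integral_mono) (auto simp: k_def indicator_def simp flip: ennreal_plus)
  also have "\<dots> = (\<integral>\<^sup>+y. k y \<partial>lborel) + (\<integral>\<^sup>+y. k (0 + (-1) * y) \<partial>lborel)"
    by (intro nn_integral_add) auto
  also have "(\<integral>\<^sup>+y. k (0 + (-1) * y) \<partial>lborel) = (\<integral>\<^sup>+y. k y \<partial>lborel)"
    using nn_integral_real_affine[of k "-1" 0] by simp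
  also have "(\<integral>\<^sup>+y. k y \<partial>lborel) = ennreal (1/b)"
    unfolding k_def by (rule nn_exp_half[OF assms])
  also have "ennreal (1/b) + ennreal (1/b) = ennreal (2/b)"
    using assms by (simp flip: ennreal_plus)
  finally show ?thesis .
qed

lemma seqtest: fixes \<kappa> c N :: real assumes "\<kappa> > 0" shows "((\<lambda>n::nat. exp (-\<kappa>*(real n - N)) * c) \<longlongrightarrow> 0) sequentially"
  using assms by real_asymp


lemma conv_bound:
  fixes a \<kappa> C :: real and G :: "real \<Rightarrow> real"
  assumes a: "a > 0" "\<kappa> > 0" "2*\<kappa> \<le> a" and Gp: "\<And>x. G x > 0" and C: "C > 0"
    and GC: "\<And>x y. G y \<le> C * G x * exp (\<kappa> * \<bar>x-y\<bar>)"
  shows "conv (\<lambda>z. 1 / (2*a) * exp (-a*\<bar>z\<bar>)) G x \<le> 2*C/a^2 * G x"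
proof -
  define f where "f = (\<lambda>y. 1 / (2*a) * exp (-a*\<bar>x-y\<bar>) * G y)"
  define b where "b = a - \<kappa>"
  define K where "K = C * G x / (2*a)"
  have b: "b > 0" "b \<ge> a/2" using a by (auto simp: b_def)
  have K: "K > 0" using Gp[of x] C a by (simp add: K_def)
  have bound: "K * (2/b) \<le> 2*C/a^2 * G x"
  proof -
    have "K * (2/b) = C * G x / (a*b)" using a b by (simp add: K_def field_simps)
    also have "\<dots> \<le> C * G x / (a*(a/2))"
      using a b C Gp[of x] by (intro divide_left_mono mult_left_mono) auto
    also have "\<dots> = 2*C/a^2 * G x" by (simp add: field_simps power2_eq_square)
    finally show ?thesis .
  qed
  have conv_eq: "conv (\<lambda>z. 1 / (2*a) * exp (-a*\<bar>z\<bar>)) G x = integral\<^sup>L lborel f"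
    unfolding conv_def f_def by simp
  show ?thesis
  proof (cases "integrable lborel f")
    case False
    then have "integral\<^sup>L lborel f = 0" by (rule not_integrable_integral_eq)
    then show ?thesis using conv_eq C a Gp[of x] by simp
  next
    case True
    have fpt: "f y \<le> K * exp (-b*\<bar>x-y\<bar>)" for y
    proof -
      have "f y \<le> 1 / (2*a) * exp (-a*\<bar>x-y\<bar>) * (C * G x * exp (\<kappa> * \<bar>x-y\<bar>))"
        unfolding f_def using GC[of y x] a by (intro mult_left_mono) auto
      also have "\<dots> = K * (exp (-a*\<bar>x-y\<bar>) * exp (\<kappa> * \<bar>x-y\<bar>))" by (simp add: K_def)
      also have "exp (-a*\<bar>x-y\<bar>) * exp (\<kappa> * \<bar>x-y\<bar>) = exp (-b*\<bar>x-y\<bar>)"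
        by (simp add: b_def flip: exp_add) (simp add: algebra_simps)
      finally show ?thesis .
    qed
    have "ennreal (integral\<^sup>L lborel f) = (\<integral>\<^sup>+y. ennreal (f y) \<partial>lborel)"
      using True Gp a by (intro nn_integral_eq_integral[symmetric] AE_I2) (auto simp: f_def less_imp_le)
    also have "\<dots> \<le> (\<integral>\<^sup>+y. ennreal K * ennreal (exp (-b*\<bar>x-y\<bar>)) \<partial>lborel)"
      using K fpt by (intro nn_integral_mono) (simp add: ennreal_leI flip: ennreal_mult)
    also have "\<dots> = ennreal K * (\<integral>\<^sup>+y. ennreal (exp (-b*\<bar>x-y\<bar>)) \<partial>lborel)"
      by (intro nn_integral_cmult) measurable
    also have "\<dots> \<le> ennreal K * ennreal (2/b)"
      by (intro mult_left_mono nn_exp_abs b) auto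
    also have "\<dots> = ennreal (K * (2/b))" using K b by (simp flip: ennreal_mult)
    finally have "integral\<^sup>L lborel f \<le> K * (2/b)"
      using K b by (subst (asm) ennreal_le_iff) auto
    then show ?thesis using bound conv_eq by simp
  qed
qed


primrec gseq :: "(nat \<Rightarrow> real) \<Rightarrow> real \<Rightarrow> nat \<Rightarrow> real" where
  "gseq H k 0 = H 0 + 1"
| "gseq H k (Suc n) = max (H (Suc n)) (exp (-k) * gseq H k n)"

lemma gseq_props:
  fixes H :: "nat \<Rightarrow> real" and k :: real
  assumes k: "k > 0" and H0: "\<And>n. H n \<ge> 0" and Hd: "decseq H" and Hlim: "H \<longlonglongrightarrow> 0"
  shows "\<And>n. gseq H k n > 0" "\<And>n. H n \<le> gseq H k n" "decseq (gseq H k)"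
    "gseq H k \<longlonglongrightarrow> 0"
    "\<And>n m. n \<le> m \<Longrightarrow> gseq H k n \<le> exp (k * (real m - real n)) * gseq H k m"
proof -
  let ?g = "gseq H k"
  show pos: "?g n > 0" for n
    by (induction n) (auto simp: H0 add_nonneg_pos intro: max.strict_coboundedI2)
  show ge: "H n \<le> ?g n" for n
    by (cases n) auto
  show dec: "decseq ?g"
  proof (rule decseq_SucI)
    fix n
    have "H (Suc n) \<le> ?g n" using decseqD[OF Hd, of n "Suc n"] ge[of n] by simp
    moreover have "exp (-k) * ?g n \<le> ?g n" using pos[of n] k by (simp add: mult_le_cancel_right1)
    ultimately show "?g (Suc n) \<le> ?g n" by simp
  qed
  show "?g n \<le> exp (k * (real m - real n)) * ?g m" if "n \<le> m" for n m
    using that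
  proof (induction m rule: dec_induct)
    case base then show ?case by simp
  next
    case (step m)
    have "exp (-k) * ?g m \<le> ?g (Suc m)" by simp
    then have "exp k * (exp (-k) * ?g m) \<le> exp k * ?g (Suc m)"
      by (intro mult_left_mono) auto
    then have "?g m \<le> exp k * ?g (Suc m)"
      by (simp add: mult.assoc[symmetric] flip: exp_add)
    then have "exp (k * (real m - real n)) * ?g m \<le> exp (k * (real m - real n)) * (exp k * ?g (Suc m))"
      by (intro mult_left_mono) auto
    also have "\<dots> = exp (k * (real (Suc m) - real n)) * ?g (Suc m)"
      by (simp add: algebra_simps flip: exp_add)
    finally show ?case using step.IH by linarith
  qed
  show "?g \<longlonglongrightarrow> 0"
  proof (rule order_tendstoI)
    fix a :: real assume "a < 0"
    then show "\<forall>\<^sub>F n in sequentially. a < ?g n" using pos by (intro always_eventually allI) (auto intro: less_trans)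
  next
    fix e :: real assume e: "e > 0"
    then have "\<forall>\<^sub>F n in sequentially. H n < e/2" using Hlim by (intro order_tendstoD) auto
    then obtain N where N: "\<And>n. n \<ge> N \<Longrightarrow> H n < e/2" by (auto simp: eventually_sequentially)
    have bnd: "?g n \<le> e/2 + exp (-k*(real n - real N)) * ?g N" if "N \<le> n" for n
      using that
    proof (induction n rule: dec_induct)
      case base then show ?case using e by simp
    next
      case (step m)
      have "H (Suc m) \<le> e/2 + exp (-k*(real (Suc m) - real N)) * ?g N"
      proof -
        have p: "0 < exp (-k*(real (Suc m) - real N)) * ?g N" using pos[of N] by simp
        have "N \<le> Suc m" using step(1) by simp
        then have "H (Suc m) < e/2" by (rule N)
        then show ?thesis using p by linarith
      qed
      moreover have "exp (-k) * ?g m \<le> e/2 + exp (-k*(real (Suc m) - real N)) * ?g N"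
      proof -
        have "exp (-k) * ?g m \<le> exp (-k) * (e/2 + exp (-k*(real m - real N)) * ?g N)"
          using step.IH by (intro mult_left_mono) auto
        also have "\<dots> = exp (-k) * (e/2) + exp (-k*(real (Suc m) - real N)) * ?g N"
          by (simp add: algebra_simps flip: exp_add)
        also have "\<dots> \<le> e/2 + exp (-k*(real (Suc m) - real N)) * ?g N"
          using k e by (simp add: mult_le_cancel_right1)
        finally show ?thesis .
      qed
      ultimately show ?case by simp
    qed
    have "((\<lambda>n::nat. exp (-k*(real n - real N)) * ?g N) \<longlonglongrightarrow> 0)"
      using seqtest[OF k, of "real N" "?g N"] by simp
    then have "\<forall>\<^sub>F n in sequentially. exp (-k*(real n - real N)) * ?g N < e/2"
      using e by (intro order_tendstoD) auto
    moreover have "\<forall>\<^sub>F n in sequentially. N \<le> n" by (rule eventually_ge_at_top)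
    ultimately show "\<forall>\<^sub>F n in sequentially. ?g n < e"
      by eventually_elim (use bnd in fastforce)
  qed
qed


lemma theta_bounded:
  fixes \<theta> :: "real \<Rightarrow> real"
  assumes "continuous_on UNIV \<theta>" "(\<theta> \<longlongrightarrow> 0) at_infinity"
  obtains B where "B \<ge> 0" "\<And>y. \<bar>\<theta> y\<bar> \<le> B"
proof -
  have "\<forall>\<^sub>F y in at_infinity. dist (\<theta> y) 0 < 1" using assms(2) by (rule tendstoD) simp
  then obtain R where R: "\<And>y. R \<le> norm y \<Longrightarrow> \<bar>\<theta> y\<bar> < 1"
    unfolding eventually_at_infinity by auto
  have "compact (\<theta> ` cball 0 R)"
    by (intro compact_continuous_image continuous_on_subset[OF assms(1)]) auto
  then obtain B1 where B1: "\<And>z. z \<in> \<theta> ` cball 0 R \<Longrightarrow> norm z \<le> B1"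
    using compact_imp_bounded bounded_iff by metis
  show ?thesis
  proof (rule that[of "max 1 B1"])
    fix y
    show "\<bar>\<theta> y\<bar> \<le> max 1 B1"
    proof (cases "R \<le> norm y")
      case True then show ?thesis using R[of y] by simp
    next
      case False then have "\<theta> y \<in> \<theta> ` cball 0 R" by auto
      then show ?thesis using B1 by fastforce
    qed
  qed simp
qed


lemma rho_eq:
  assumes "0 < A" "A < 1"
  shows "rho A i = (\<lambda>z. 1 / (2 * sqrt (if i = 0 then 1 - A else 2 * real i * A)) *
            exp (- sqrt (if i = 0 then 1 - A else 2 * real i * A) * \<bar>z\<bar>))"
  by (auto simp: rho_def lam_def algebra_simps)

theorem mainTheorem5:
  fixes A :: real and \<theta> :: "real \<Rightarrow> real"
  assumes "0 < A" "A < 1"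
    and "continuous_on UNIV \<theta>"
    and "(\<theta> \<longlongrightarrow> 0) at_infinity"
  shows "\<exists>G :: real \<Rightarrow> real.
           piecewise_constant G \<and> (\<forall>x. G x > 0) \<and>
           (\<forall>x. G x \<ge> max \<bar>\<theta> x\<bar> ((\<theta> x)\<^sup>2)) \<and>
           (\<forall>x. G (- x) = G x) \<and>
           (\<forall>x y. 0 \<le> x \<longrightarrow> x \<le> y \<longrightarrow> G y \<le> G x) \<and>
           (G \<longlongrightarrow> 0) at_top \<and>
           (\<exists>\<sigma>>0. \<forall>i::nat. \<forall>x. conv (rho A i) G x \<le> \<sigma> / (1 + real i) * G x)"
proof -
  obtain B where B: "B \<ge> 0" "\<And>y. \<bar>\<theta> y\<bar> \<le> B" using theta_bounded[OF assms(3,4)] by blast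
  define \<phi> where "\<phi> = (\<lambda>y. max \<bar>\<theta> y\<bar> ((\<theta> y)\<^sup>2))"
  have \<phi>0: "\<phi> y \<ge> 0" for y by (simp add: \<phi>_def)
  have \<phi>B: "\<phi> y \<le> B + B^2" for y
  proof -
    have "(\<theta> y)\<^sup>2 \<le> B^2" using B(2)[of y] by (metis abs_ge_zero power2_abs power_mono)
    moreover have "\<bar>\<theta> y\<bar> \<le> B" by (rule B(2))
    moreover have "0 \<le> B^2" by simp
    ultimately show ?thesis using B(1) unfolding \<phi>_def by linarith
  qed
  define H where "H = (\<lambda>n::nat. Sup (\<phi> ` {y. real n \<le> \<bar>y\<bar>}))"
  have bdd: "bdd_above (\<phi> ` S)" for S using \<phi>B by (intro bdd_aboveI[of _ "B + B^2"]) auto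
  have Hge: "\<phi> y \<le> H n" if "real n \<le> \<bar>y\<bar>" for n y
    unfolding H_def using that by (intro cSup_upper bdd) auto
  have H0: "H n \<ge> 0" for n using Hge[of n "real n"] \<phi>0[of "real n"] by simp
  have Hdec: "decseq H"
  proof (rule antimonoI)
    fix m n :: nat assume "m \<le> n"
    then have sub: "{y. real n \<le> \<bar>y\<bar>} \<subseteq> {y. real m \<le> \<bar>y\<bar>}" by auto
    have ne: "real n \<in> {y. real n \<le> \<bar>y\<bar>}" by simp
    show "H n \<le> H m"
      unfolding H_def using sub ne by (intro cSup_subset_mono bdd image_mono) blast+
  qed
  have Hlim: "H \<longlonglongrightarrow> 0"
  proof (rule order_tendstoI)
    fix a :: real assume "a < 0" then show "\<forall>\<^sub>F n in sequentially. a < H n"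
      using H0 by (intro always_eventually allI) (auto intro: less_le_trans)
  next
    fix e :: real assume e: "e > 0"
    have "\<forall>\<^sub>F y in at_infinity. dist (\<theta> y) 0 < min (e/2) 1" using assms(4) e by (intro tendstoD) auto
    then obtain R where R: "\<And>y. R \<le> norm y \<Longrightarrow> \<bar>\<theta> y\<bar> < min (e/2) 1"
      unfolding eventually_at_infinity by auto
    have "\<phi> y \<le> e/2" if "R \<le> \<bar>y\<bar>" for y
    proof -
      have t: "\<bar>\<theta> y\<bar> < min (e/2) 1" using R[of y] that by simp
      have "\<bar>\<theta> y\<bar> * \<bar>\<theta> y\<bar> \<le> \<bar>\<theta> y\<bar> * 1"
        using t by (intro mult_left_mono) auto
      then have "(\<theta> y)\<^sup>2 \<le> \<bar>\<theta> y\<bar>"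
        by (simp add: power2_eq_square abs_mult_self_eq)
      then show ?thesis using t by (simp add: \<phi>_def)
    qed
    then have Hn: "H n \<le> e/2" if "R \<le> real n" for n
      unfolding H_def using that by (intro cSup_least) (auto intro!: exI[of _ "real n"])
    obtain N :: nat where "R \<le> real N" using real_arch_simple by blast
    have "\<forall>n\<ge>N. H n < e"
    proof (intro allI impI)
      fix n assume "N \<le> n"
      then have "R \<le> real n" using \<open>R \<le> real N\<close> by (meson of_nat_le_iff order_trans)
      then have "H n \<le> e/2" by (rule Hn)
      then show "H n < e" using e by linarith
    qed
    then show "\<forall>\<^sub>F n in sequentially. H n < e"
      unfolding eventually_sequentially by blast
  qed
  define d where "d = (\<lambda>i::nat. if i = 0 then 1 - A else 2 * real i * A)"
  define \<kappa> where "\<kappa> = min (sqrt (2*A)) (sqrt (1-A)) / 2"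
  have \<kappa>: "\<kappa> > 0" using assms by (simp add: \<kappa>_def)
  have dk: "2 * \<kappa> \<le> sqrt (d i)" for i
  proof (cases "i = 0")
    case True then show ?thesis by (simp add: d_def \<kappa>_def)
  next
    case False
    then have "sqrt (2*A) \<le> sqrt (d i)" using assms by (simp add: d_def)
    then show ?thesis unfolding \<kappa>_def by linarith
  qed
  have dpos: "d i > 0" for i using assms by (simp add: d_def)
  define g where "g = gseq H \<kappa>"
  note gp = gseq_props[OF \<kappa> H0 Hdec Hlim, folded g_def]
  define G where "G = (\<lambda>x::real. g (nat \<lfloor>\<bar>x\<bar>\<rfloor>))"
  define C where "C = exp \<kappa>"
  have Gpos: "G x > 0" for x using gp(1) by (simp add: G_def)
  have Gphi: "\<phi> x \<le> G x" for x
  proof -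
    have "real (nat \<lfloor>\<bar>x\<bar>\<rfloor>) \<le> \<bar>x\<bar>" by linarith
    then show ?thesis unfolding G_def using Hge gp(2) order_trans by blast
  qed
  have Gmono: "G y \<le> G x" if "\<bar>x\<bar> \<le> \<bar>y\<bar>" for x y
  proof -
    have "nat \<lfloor>\<bar>x\<bar>\<rfloor> \<le> nat \<lfloor>\<bar>y\<bar>\<rfloor>" using that by (intro nat_mono floor_mono)
    then show ?thesis unfolding G_def using decseqD[OF gp(3)] by blast
  qed
  have GC: "G y \<le> C * G x * exp (\<kappa> * \<bar>x - y\<bar>)" for x y
  proof (cases "\<bar>x\<bar> \<le> \<bar>y\<bar>")
    case True
    have "1 \<le> C * exp (\<kappa> * \<bar>x - y\<bar>)" using \<kappa> by (simp add: C_def flip: exp_add)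
    then have "G x \<le> C * G x * exp (\<kappa> * \<bar>x - y\<bar>)"
      using Gpos[of x] by (simp add: mult_le_cancel_left1 mult.commute mult.left_commute)
    then show ?thesis using Gmono[OF True] by linarith
  next
    case False
    define n where "n = nat \<lfloor>\<bar>y\<bar>\<rfloor>"
    define m where "m = nat \<lfloor>\<bar>x\<bar>\<rfloor>"
    have nm: "n \<le> m" using False unfolding n_def m_def by (intro nat_mono floor_mono) simp
    have "real m - real n \<le> 1 + \<bar>x - y\<bar>" unfolding n_def m_def by linarith
    then have "\<kappa> * (real m - real n) \<le> \<kappa> * (1 + \<bar>x - y\<bar>)"
      using \<kappa> by (intro mult_left_mono) auto
    then have e: "exp (\<kappa> * (real m - real n)) \<le> C * exp (\<kappa> * \<bar>x - y\<bar>)"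
      by (simp add: C_def flip: exp_add) (simp add: algebra_simps)
    have "G y = g n" by (simp add: G_def n_def)
    also have "\<dots> \<le> exp (\<kappa> * (real m - real n)) * g m" using gp(5)[OF nm] .
    also have "\<dots> \<le> C * exp (\<kappa> * \<bar>x - y\<bar>) * g m" using e gp(1)[of m] by (simp add: mult_right_mono)
    also have "\<dots> = C * G x * exp (\<kappa> * \<bar>x - y\<bar>)" by (simp add: G_def m_def)
    finally show ?thesis .
  qed
  have pc: "piecewise_constant G"
    unfolding piecewise_constant_def
  proof (intro exI[of _ "\<int>"] conjI allI impI)
    fix a b :: real
    have "\<int> \<inter> {a..b} \<subseteq> of_int ` {\<lfloor>a\<rfloor>..\<lceil>b\<rceil>}"
    proof
      fix z assume "z \<in> \<int> \<inter> {a..b}"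
      then obtain k where k: "z = of_int k" "a \<le> of_int k" "of_int k \<le> b" by (auto elim: Ints_cases)
      then have "\<lfloor>a\<rfloor> \<le> k" "k \<le> \<lceil>b\<rceil>" by linarith+
      then show "z \<in> of_int ` {\<lfloor>a\<rfloor>..\<lceil>b\<rceil>}" using k by auto
    qed
    then show "finite (\<int> \<inter> {a..b})" by (rule finite_subset) simp
  next
    fix x :: real assume x: "x \<notin> \<int>"
    have ax: "\<bar>x\<bar> \<notin> \<int>"
    proof
      assume "\<bar>x\<bar> \<in> \<int>"
      then have "- \<bar>x\<bar> \<in> \<int>" by simp
      then show False using x \<open>\<bar>x\<bar> \<in> \<int>\<close> by (cases "x \<ge> 0") auto
    qed
    define e where "e = min (\<bar>x\<bar> - \<lfloor>\<bar>x\<bar>\<rfloor>) (\<lfloor>\<bar>x\<bar>\<rfloor> + 1 - \<bar>x\<bar>)"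
    have "\<bar>x\<bar> \<noteq> of_int \<lfloor>\<bar>x\<bar>\<rfloor>" using ax by (metis Ints_of_int)
    then have epos: "e > 0" unfolding e_def by (simp add: order.strict_iff_order) linarith
    show "\<exists>e>0. \<forall>y. \<bar>y - x\<bar> < e \<longrightarrow> G y = G x"
    proof (intro exI[of _ e] conjI allI impI epos)
      fix y assume "\<bar>y - x\<bar> < e"
      then have "\<bar>\<bar>y\<bar> - \<bar>x\<bar>\<bar> < e" by linarith
      then have "\<lfloor>\<bar>y\<bar>\<rfloor> = \<lfloor>\<bar>x\<bar>\<rfloor>" unfolding e_def by (intro floor_unique) linarith+
      then show "G y = G x" by (simp add: G_def)
    qed
  qed
  have lim: "(G \<longlongrightarrow> 0) at_top"
  proof (rule order_tendstoI)
    fix a :: real assume "a < 0" then show "\<forall>\<^sub>F x in at_top. a < G x"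
      using Gpos by (intro always_eventually allI) (auto intro: less_trans)
  next
    fix a :: real assume "a > 0"
    then have "\<forall>\<^sub>F n in sequentially. g n < a" using order_tendstoD(2)[OF gp(4)] by blast
    then obtain N where N: "\<And>n. n \<ge> N \<Longrightarrow> g n < a" by (auto simp: eventually_sequentially)
    show "\<forall>\<^sub>F x in at_top. G x < a"
      unfolding eventually_at_top_linorder
    proof (intro exI[of _ "real N"] allI impI)
      fix x assume "real N \<le> x"
      then have "N \<le> nat \<lfloor>\<bar>x\<bar>\<rfloor>" by linarith
      then show "G x < a" unfolding G_def by (rule N)
    qed
  qed
  define \<sigma> where "\<sigma> = 2*C/A + 2*C/(1-A)"
  have C: "C > 0" by (simp add: C_def)
  have "2*C/A > 0" "2*C/(1-A) > 0" using assms C by auto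
  then have \<sigma>: "\<sigma> > 0" by (simp add: \<sigma>_def)
  have convb: "conv (rho A i) G x \<le> \<sigma> / (1 + real i) * G x" for i x
  proof -
    have r: "rho A i = (\<lambda>z. 1 / (2 * sqrt (d i)) * exp (- sqrt (d i) * \<bar>z\<bar>))"
      unfolding d_def by (rule rho_eq[OF assms(1,2)])
    have "conv (rho A i) G x \<le> 2*C/(sqrt (d i))^2 * G x"
      unfolding r using dpos[of i] \<kappa> dk[of i] Gpos C GC by (intro conv_bound) auto
    also have "2*C/(sqrt (d i))^2 \<le> \<sigma> / (1 + real i)"
    proof (cases "i = 0")
      case True then show ?thesis using assms C by (simp add: d_def \<sigma>_def)
    next
      case False
      have "2*C/(sqrt (d i))^2 = (2*C/A) / (2 * real i)"
        using False assms dpos[of i] by (simp add: d_def)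
      also have "\<dots> \<le> (2*C/A) / (1 + real i)"
        using False assms C by (intro divide_left_mono) auto
      also have "\<dots> \<le> \<sigma> / (1 + real i)"
        using assms C by (intro divide_right_mono) (auto simp: \<sigma>_def)
      finally show ?thesis .
    qed
    then have "2*C/(sqrt (d i))^2 * G x \<le> \<sigma> / (1 + real i) * G x"
      using Gpos[of x] by (intro mult_right_mono) auto
    finally show ?thesis .
  qed
  have Gev: "G (- x) = G x" for x by (simp add: G_def)
  have Gm: "\<forall>x y. 0 \<le> x \<longrightarrow> x \<le> y \<longrightarrow> G y \<le> G x"
    using Gmono by auto
  have Gp: "\<forall>x. G x \<ge> max \<bar>\<theta> x\<bar> ((\<theta> x)\<^sup>2)" using Gphi by (simp add: \<phi>_def)
  show ?thesis
    apply (rule exI[of _ G])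
    using pc Gpos Gp lim convb \<sigma> Gm Gev by blast
qed

end
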